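(* For any $k\in\mathbb{Z}_{>0}$ and $i\in\{1,2,3\}$, suppose $\mathrm{S}_{k,i}(x,z)=\tfrac12[x;z]^TQ_{k,i}[x;z]$ and $\mathrm{B}_{k,i}(y,z)=-\tfrac12[y;z]^T\Theta_{k,i}[y;z]$. Then $\Theta_{k,i}=\Gamma^i(Q_{k,i})$ and $Q_{k,i}=\Gamma^i(\Theta_{k,i})$.
   Context: Consider $x_{k+1}=Ax_k+Bw_k$ with $x_k\in\mathbb{R}^n$, $w_k\in\mathbb{R}^m$, running payoff $\tfrac12x^T\Phi x-\tfrac{\gamma^2}{2}|w|^2$, and one-step operator $(\mathcal{S}_1\phi)(x)=\sup_{w}\{\tfrac12x^T\Phi x-\tfrac{\gamma^2}{2}|w|^2+\phi(Ax+Bw)\}$, $\mathcal{S}_{k+1}=\mathcal{S}_1\mathcal{S}_k$. Basis functions: $\psi^1(x,z)=z^Tx$, $\psi^2(x,z)=-\tfrac12(x-z)^TM(x-z)$ ($M=M^T>0$), $\psi^3(x,z)=\delta(x-z)$ ($\delta(0)=0$, $\delta(\xi)=-\infty$ otherwise). Define $\mathrm{S}_{k,i}(x,z)=(\mathcal{S}_k\psi^i(\cdot,z))(x)$ and its max-plus dual $\mathrm{B}_{k,i}(y,z)=-\sup_{x\in\mathbb{R}^n}\{\psi^i(x,y)-\mathrm{S}_{k,i}(x,z)\}$, so that $\mathrm{S}_{k,i}(x,z)=\sup_y\{\psi^i(x,y)+\mathrm{B}_{k,i}(y,z)\}$. For a symmetric block matrix $Q=\begin{bmatrix}Q^{11}&Q^{12}\\Q^{21}&Q^{22}\end{bmatrix}\in\mathbb{R}^{2n\times2n}$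 define $\Gamma^1(Q)=\begin{bmatrix}(Q^{11})^{-1}&-(Q^{11})^{-1}Q^{12}\\-Q^{21}(Q^{11})^{-1}&Q^{21}(Q^{11})^{-1}Q^{12}-Q^{22}\end{bmatrix}$ (requires $Q^{11}>0$), $\Gamma^2(Q)=\begin{bmatrix}M(Q^{11}+M)^{-1}M-M&-M(Q^{11}+M)^{-1}Q^{12}\\-Q^{21}(Q^{11}+M)^{-1}M&Q^{21}(Q^{11}+M)^{-1}Q^{12}-Q^{22}\end{bmatrix}$ (requires $Q^{11}+M>0$), $\Gamma^3(Q)=-Q$. One has $\Gamma^i\circ\Gamma^i$ equal to the identity. *)

theory Defs
  imports "HOL-Analysis.Analysis"
begin

text \<open>Vectors in R^n are real^'n; block vectors [x;z] in R^{2n} are indexed by 'n + 'n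
  (Inl = first block, Inr = second block); 2n x 2n matrices are real^('n+'n)^('n+'n).\<close>

definition stack :: "real^'n \<Rightarrow> real^'n \<Rightarrow> real^('n + 'n)" where
  "stack x z = (\<chi> i. case i of Inl j \<Rightarrow> x $ j | Inr j \<Rightarrow> z $ j)"

definition blk11 :: "real^('n+'n)^('n+'n) \<Rightarrow> real^'n^'n" where
  "blk11 Q = (\<chi> i j. Q $ Inl i $ Inl j)"
definition blk12 :: "real^('n+'n)^('n+'n) \<Rightarrow> real^'n^'n" where
  "blk12 Q = (\<chi> i j. Q $ Inl i $ Inr j)"
definition blk21 :: "real^('n+'n)^('n+'n) \<Rightarrow> real^'n^'n" where
  "blk21 Q = (\<chi> i j. Q $ Inr i $ Inl j)"
definition blk22 :: "real^('n+'n)^('n+'n) \<Rightarrow> real^'n^'n" where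
  "blk22 Q = (\<chi> i j. Q $ Inr i $ Inr j)"

definition blockmat ::
  "real^'n^'n \<Rightarrow> real^'n^'n \<Rightarrow> real^'n^'n \<Rightarrow> real^'n^'n \<Rightarrow> real^('n+'n)^('n+'n)" where
  "blockmat P11 P12 P21 P22 = (\<chi> i j. case i of
      Inl a \<Rightarrow> (case j of Inl b \<Rightarrow> P11 $ a $ b | Inr b \<Rightarrow> P12 $ a $ b)
    | Inr a \<Rightarrow> (case j of Inl b \<Rightarrow> P21 $ a $ b | Inr b \<Rightarrow> P22 $ a $ b))"

definition pos_def_mat :: "real^'n^'n \<Rightarrow> bool" where
  "pos_def_mat P \<longleftrightarrow> transpose P = P \<and> (\<forall>x. x \<noteq> 0 \<longrightarrow> x \<bullet> (P *v x) > 0)"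

definition Gamma :: "real^'n^'n \<Rightarrow> nat \<Rightarrow> real^('n+'n)^('n+'n) \<Rightarrow> real^('n+'n)^('n+'n)" where
  "Gamma M i Q =
    (if i = 1 then
       (let Q11 = blk11 Q; Q12 = blk12 Q; Q21 = blk21 Q; Q22 = blk22 Q; R = matrix_inv Q11 in
        blockmat R (- (R ** Q12)) (- (Q21 ** R)) (Q21 ** R ** Q12 - Q22))
     else if i = 2 then
       (let Q11 = blk11 Q; Q12 = blk12 Q; Q21 = blk21 Q; Q22 = blk22 Q; R = matrix_inv (Q11 + M) in
        blockmat (M ** R ** M - M) (- (M ** R ** Q12)) (- (Q21 ** R ** M)) (Q21 ** R ** Q12 - Q22))
     else - Q)"

definition S1 :: "real^'n^'n \<Rightarrow> real^'m^'n \<Rightarrow> real^'n^'n \<Rightarrow> real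
    \<Rightarrow> (real^'n \<Rightarrow> ereal) \<Rightarrow> (real^'n \<Rightarrow> ereal)" where
  "S1 A B Phi \<gamma> \<phi> x = (SUP w::real^'m.
      ereal (1/2 * (x \<bullet> (Phi *v x)) - \<gamma>\<^sup>2 / 2 * (norm w)\<^sup>2) + \<phi> (A *v x + B *v w))"

definition Sk :: "real^'n^'n \<Rightarrow> real^'m^'n \<Rightarrow> real^'n^'n \<Rightarrow> real
    \<Rightarrow> nat \<Rightarrow> (real^'n \<Rightarrow> ereal) \<Rightarrow> (real^'n \<Rightarrow> ereal)" where
  "Sk A B Phi \<gamma> k = (S1 A B Phi \<gamma> ^^ k)"

definition psi :: "real^'n^'n \<Rightarrow> nat \<Rightarrow> real^'n \<Rightarrow> real^'n \<Rightarrow> ereal" where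
  "psi M i x z =
    (if i = 1 then ereal (z \<bullet> x)
     else if i = 2 then ereal (- (1/2) * ((x - z) \<bullet> (M *v (x - z))))
     else (if x = z then 0 else - \<infinity>))"

definition Ski :: "real^'n^'n \<Rightarrow> real^'m^'n \<Rightarrow> real^'n^'n \<Rightarrow> real \<Rightarrow> real^'n^'n
    \<Rightarrow> nat \<Rightarrow> nat \<Rightarrow> real^'n \<Rightarrow> real^'n \<Rightarrow> ereal" where
  "Ski A B Phi \<gamma> M k i x z = Sk A B Phi \<gamma> k (\<lambda>x'. psi M i x' z) x"

definition Bki :: "real^'n^'n \<Rightarrow> real^'m^'n \<Rightarrow> real^'n^'n \<Rightarrow> real \<Rightarrow> real^'n^'n
    \<Rightarrow> nat \<Rightarrow> nat \<Rightarrow> real^'n \<Rightarrow> real^'n \<Rightarrow> ereal" where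
  "Bki A B Phi \<gamma> M k i y z = - (SUP x::real^'n. psi M i x y - Ski A B Phi \<gamma> M k i x z)"

end

theory Submission
  imports Defs
begin


lemma minv: fixes A :: "real^'n^'n" assumes "invertible A"
  shows "A ** matrix_inv A = mat 1" "matrix_inv A ** A = mat 1"
proof -
  have "\<exists>A'. A ** A' = mat 1 \<and> A' ** A = mat 1" using assms unfolding invertible_def by blast
  then have "A ** matrix_inv A = mat 1 \<and> matrix_inv A ** A = mat 1"
    unfolding matrix_inv_def by (rule someI_ex)
  then show "A ** matrix_inv A = mat 1" "matrix_inv A ** A = mat 1" by auto
qed

lemma minv_unique: fixes A B :: "real^'n^'n" assumes "B ** A = mat 1"
  shows "matrix_inv A = B"
proof -
  have inv: "invertible A" using assms invertible_left_inverse by blast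
  have "matrix_inv A = (B ** A) ** matrix_inv A" using assms by simp
  also have "\<dots> = B ** (A ** matrix_inv A)" by (simp add: matrix_mul_assoc)
  also have "\<dots> = B" using minv[OF inv] by simp
  finally show ?thesis .
qed

lemma posdef_inv: fixes P :: "real^'n^'n" assumes "pos_def_mat P" shows "invertible P"
proof -
  have "\<forall>x. P *v x = 0 \<longrightarrow> x = 0"
  proof (intro allI impI)
    fix x assume "P *v x = 0"
    then have "x \<bullet> (P *v x) = 0" by simp
    then show "x = 0" using assms unfolding pos_def_mat_def by (metis less_irrefl)
  qed
  then show ?thesis using invertible_left_inverse matrix_left_invertible_ker by blast
qed

lemma inner_mv: fixes A :: "real^'n^'m" shows "(A *v x) \<bullet> y = x \<bullet> (transpose A *v y)"
  by (metis dot_lmul_matrix inner_commute transpose_matrix_vector)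

lemma inv_sym: fixes P :: "real^'n^'n" assumes "invertible P" "transpose P = P"
  shows "transpose (matrix_inv P) = matrix_inv P"
proof -
  have "transpose (matrix_inv P) ** P = mat 1"
    by (metis assms(2) matrix_transpose_mul minv(1)[OF assms(1)] transpose_mat)
  then have "matrix_inv P = transpose (matrix_inv P)" by (rule minv_unique)
  then show ?thesis by simp
qed

lemma mv_neg: fixes A :: "real^'n^'m" shows "(- A) *v x = - (A *v x)"
  by (simp add: vec_eq_iff matrix_vector_mult_def sum_negf)

lemma mv_negr: fixes A :: "real^'n^'m" shows "A *v (- x) = - (A *v x)"
  by (simp add: vec_eq_iff matrix_vector_mult_def sum_negf)

lemma tr_neg: "transpose (- A) = - transpose (A::real^'n^'m)"
  by (simp add: vec_eq_iff transpose_def)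
lemma tr_diff: "transpose (A - B) = transpose A - transpose (B::real^'n^'m)"
  by (simp add: vec_eq_iff transpose_def)

lemma quad_eq_mat: fixes P P' :: "real^'k^'k"
  assumes "transpose P = P" "transpose P' = P'" "\<And>v. v \<bullet> (P *v v) = v \<bullet> (P' *v v)"
  shows "P = P'"
proof -
  define D where "D = P - P'"
  have Ds: "transpose D = D" using assms by (simp add: D_def tr_diff)
  have D0: "v \<bullet> (D *v v) = 0" for v using assms(3)[of v]
    by (simp add: D_def matrix_vector_mult_diff_rdistrib inner_diff_right)
  have sy: "x \<bullet> (D *v y) = y \<bullet> (D *v x)" for x y
    by (metis Ds inner_commute inner_mv)
  have "x \<bullet> (D *v y) = 0" for x y
  proof -
    have "(x+y) \<bullet> (D *v (x+y)) = 0" by (rule D0)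
    then have "x \<bullet> (D *v x) + x \<bullet> (D *v y) + (y \<bullet> (D *v x) + y \<bullet> (D *v y)) = 0"
      by (simp add: matrix_vector_right_distrib inner_add_left inner_add_right)
    then show ?thesis using D0[of x] D0[of y] sy[of x y] by simp
  qed
  then have "D *v y = 0" for y by (metis inner_eq_zero_iff)
  then have "D = 0" by (simp add: matrix_eq)
  then show ?thesis by (simp add: D_def)
qed

lemma stack_eta: "v = stack (\<chi> j. v $ Inl j) (\<chi> j. v $ Inr j)"
  by (simp add: stack_def vec_eq_iff split: sum.split)

lemma sum_plus_UNIV: "sum f (UNIV :: ('a::finite + 'b::finite) set) = (\<Sum>i\<in>UNIV. f (Inl i)) + (\<Sum>j\<in>UNIV. f (Inr j))"
  using sum.Plus[of "UNIV::'a set" "UNIV::'b set" f] by (simp add: comp_def)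

lemma stack_inner: "stack a b \<bullet> stack c d = a \<bullet> c + b \<bullet> d"
  by (simp add: inner_vec_def sum_plus_UNIV stack_def)

lemma mv_stack: "Q *v stack x z = stack (blk11 Q *v x + blk12 Q *v z) (blk21 Q *v x + blk22 Q *v z)"
  by (simp add: vec_eq_iff matrix_vector_mult_def stack_def blk11_def blk12_def blk21_def blk22_def
      sum_plus_UNIV split: sum.split)

lemma quad_stack: "stack x z \<bullet> (Q *v stack x z) =
   x \<bullet> (blk11 Q *v x) + x \<bullet> (blk12 Q *v z) + z \<bullet> (blk21 Q *v x) + z \<bullet> (blk22 Q *v z)"
  by (simp add: mv_stack stack_inner inner_add_right)

lemma blk_blockmat [simp]: "blk11 (blockmat a b c d) = a" "blk12 (blockmat a b c d) = b"
  "blk21 (blockmat a b c d) = c" "blk22 (blockmat a b c d) = d"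
  by (simp_all add: vec_eq_iff blk11_def blk12_def blk21_def blk22_def blockmat_def)

lemma blockmat_blk: "Q = blockmat (blk11 Q) (blk12 Q) (blk21 Q) (blk22 Q)"
  by (simp add: vec_eq_iff blk11_def blk12_def blk21_def blk22_def blockmat_def split: sum.split)

lemma tr_blockmat: "transpose (blockmat a b c d) = blockmat (transpose a) (transpose c) (transpose b) (transpose d)"
  by (simp add: vec_eq_iff transpose_def blockmat_def split: sum.split)

lemma sym_blocks: assumes "transpose Q = Q"
  shows "transpose (blk11 Q) = blk11 Q" "transpose (blk22 Q) = blk22 Q" "transpose (blk12 Q) = blk21 Q"
    "transpose (blk21 Q) = blk12 Q"
  using assms by (simp_all add: vec_eq_iff transpose_def blk11_def blk12_def blk21_def blk22_def)



lemma sup_quad: fixes P :: "real^'n^'n" assumes pd: "pos_def_mat P"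
  shows "(SUP x. ereal (b \<bullet> x - 1/2 * (x \<bullet> (P *v x)) - c)) = ereal (1/2 * (b \<bullet> (matrix_inv P *v b)) - c)"
proof -
  have inv: "invertible P" by (rule posdef_inv[OF pd])
  have Ps: "transpose P = P" using pd unfolding pos_def_mat_def by simp
  define R where "R = matrix_inv P"
  have PR: "P *v (R *v v) = v" for v using minv(1)[OF inv]
    by (simp add: R_def matrix_vector_mul_assoc)
  have Rs: "transpose R = R" using inv_sym[OF inv Ps] by (simp add: R_def)
  define x0 where "x0 = R *v b"
  have sy: "u \<bullet> (P *v w) = w \<bullet> (P *v u)" for u w by (metis Ps inner_commute inner_mv)
  have nn: "0 \<le> u \<bullet> (P *v u)" for u
    using pd unfolding pos_def_mat_def by (cases "u = 0") (auto intro: less_imp_le)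
  have key: "b \<bullet> x - 1/2 * (x \<bullet> (P *v x)) - c = 1/2 * (b \<bullet> (R *v b)) - c - 1/2 * ((x - x0) \<bullet> (P *v (x - x0)))" for x
  proof -
    have "(x - x0) \<bullet> (P *v (x - x0)) = x \<bullet> (P *v x) - x \<bullet> (P *v x0) - x0 \<bullet> (P *v x) + x0 \<bullet> (P *v x0)"
      by (simp add: matrix_vector_mult_diff_distrib inner_diff_left inner_diff_right)
    also have "\<dots> = x \<bullet> (P *v x) - 2 * (x \<bullet> b) + b \<bullet> (R *v b)"
      using sy[of x0 x] by (simp add: x0_def PR inner_commute)
    finally show ?thesis by (simp add: inner_commute algebra_simps)
  qed
  show ?thesis
  proof (rule SUP_eqI)
    fix x :: "real^'n"
    show "ereal (b \<bullet> x - 1/2 * (x \<bullet> (P *v x)) - c) \<le> ereal (1/2 * (b \<bullet> (matrix_inv P *v b)) - c)"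
      using key[of x] nn[of "x - x0"] by (simp add: R_def)
  next
    fix y assume "\<And>x. x \<in> UNIV \<Longrightarrow> ereal (b \<bullet> x - 1/2 * (x \<bullet> (P *v x)) - c) \<le> y"
    then have "ereal (b \<bullet> x0 - 1/2 * (x0 \<bullet> (P *v x0)) - c) \<le> y" by blast
    moreover have "b \<bullet> x0 - 1/2 * (x0 \<bullet> (P *v x0)) - c = 1/2 * (b \<bullet> (matrix_inv P *v b)) - c"
      using key[of x0] by (simp add: R_def)
    ultimately show "ereal (1/2 * (b \<bullet> (matrix_inv P *v b)) - c) \<le> y"
      by metis
  qed
qed

lemma posdef_bound: fixes P :: "real^'n^'n"
  assumes Ps: "transpose P = P"
    and bnd: "\<And>v t. t * a v - t\<^sup>2 * (v \<bullet> (P *v v)) / 2 \<le> C v"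
    and apos: "\<And>v. v \<noteq> 0 \<Longrightarrow> a v > 0"
  shows "pos_def_mat P"
  unfolding pos_def_mat_def
proof (intro conjI allI impI Ps)
  fix v :: "real^'n" assume v: "v \<noteq> 0"
  show "v \<bullet> (P *v v) > 0"
  proof (rule ccontr)
    assume "\<not> ?thesis"
    then have d: "v \<bullet> (P *v v) \<le> 0" by simp
    define t where "t = (\<bar>C v\<bar> + 1) / a v"
    have av: "a v > 0" using apos v by simp
    have "t * a v = \<bar>C v\<bar> + 1" using av by (simp add: t_def)
    moreover have "t\<^sup>2 * (v \<bullet> (P *v v)) / 2 \<le> 0" using d by (simp add: mult_nonneg_nonpos divide_nonpos_pos)
    moreover have "t * a v - t\<^sup>2 * (v \<bullet> (P *v v)) / 2 \<le> C v" by (rule bnd)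
    ultimately show False by linarith
  qed
qed



lemmas mvsimps = matrix_vector_mul_assoc[symmetric] mv_neg mv_negr matrix_vector_mult_diff_distrib
  matrix_vector_mult_diff_rdistrib matrix_vector_right_distrib inner_diff_left inner_diff_right
  inner_add_left inner_add_right inner_minus_left inner_minus_right

lemma case1:
  fixes A :: "real^'n^'n" and B :: "real^'m^'n" and Phi :: "real^'n^'n" and \<gamma> :: real
    and M :: "real^'n^'n" and k :: nat
    and Q \<Theta> :: "real^('n+'n)^('n+'n)"
  assumes Qsym: "transpose Q = Q" and Tsym: "transpose \<Theta> = \<Theta>"
    and SQ: "\<forall>x z. Ski A B Phi \<gamma> M k 1 x z = ereal (1/2 * (stack x z \<bullet> (Q *v stack x z)))"
    and BT: "\<forall>y z. Bki A B Phi \<gamma> M k 1 y z = ereal (- (1/2) * (stack y z \<bullet> (\<Theta> *v stack y z)))"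
  shows "\<Theta> = Gamma M 1 Q \<and> Q = Gamma M 1 \<Theta>"
proof -
  define Q11 where "Q11 = blk11 Q"
  define Q12 where "Q12 = blk12 Q"
  define Q21 where "Q21 = blk21 Q"
  define Q22 where "Q22 = blk22 Q"
  note sb = sym_blocks[OF Qsym, folded Q11_def Q12_def Q21_def Q22_def]
  have c12: "x \<bullet> (Q12 *v z) = z \<bullet> (Q21 *v x)" for x z by (metis inner_commute inner_mv sb(3))
  define F where "F y z = (SUP x. psi M 1 x y - Ski A B Phi \<gamma> M k 1 x z)" for y z
  have hF: "F y z = ereal (1/2 * (stack y z \<bullet> (\<Theta> *v stack y z)))" for y z
  proof -
    have "- F y z = ereal (- (1/2) * (stack y z \<bullet> (\<Theta> *v stack y z)))"
      using BT by (simp add: Bki_def F_def)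
    then show ?thesis by (metis ereal_uminus_uminus uminus_ereal.simps(1) mult_minus_left)
  qed
  have E: "psi M 1 x y - Ski A B Phi \<gamma> M k 1 x z =
      ereal ((y - Q12 *v z) \<bullet> x - 1/2 * (x \<bullet> (Q11 *v x)) - 1/2 * (z \<bullet> (Q22 *v z)))" for x y z
  proof -
    have "y \<bullet> x - 1/2 * (stack x z \<bullet> (Q *v stack x z)) = (y - Q12 *v z) \<bullet> x - 1/2 * (x \<bullet> (Q11 *v x)) - 1/2 * (z \<bullet> (Q22 *v z))"
      using c12[of x z] by (simp add: quad_stack Q11_def[symmetric] Q12_def[symmetric] Q21_def[symmetric]
          Q22_def[symmetric] inner_diff_left inner_commute algebra_simps)
    then show ?thesis using SQ by (simp add: psi_def)
  qed
  have FE: "F y z = (SUP x. ereal ((y - Q12 *v z) \<bullet> x - 1/2 * (x \<bullet> (Q11 *v x)) - 1/2 * (z \<bullet> (Q22 *v z))))" for y z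
    unfolding F_def E ..
  have pd: "pos_def_mat Q11"
  proof (rule posdef_bound[where a = "\<lambda>v. v \<bullet> v" and C = "\<lambda>v. 1/2 * (stack v 0 \<bullet> (\<Theta> *v stack v 0))"])
    show "transpose Q11 = Q11" by (rule sb(1))
    fix v :: "real^'n" and t :: real
    have "ereal ((v - Q12 *v 0) \<bullet> (t *\<^sub>R v) - 1/2 * ((t *\<^sub>R v) \<bullet> (Q11 *v (t *\<^sub>R v))) - 1/2 * (0 \<bullet> (Q22 *v 0))) \<le> F v 0"
      unfolding FE by (rule SUP_upper) simp
    then show "t * (v \<bullet> v) - t\<^sup>2 * (v \<bullet> (Q11 *v v)) / 2 \<le> 1/2 * (stack v 0 \<bullet> (\<Theta> *v stack v 0))"
      by (simp add: hF matrix_vector_mult_scaleR power2_eq_square algebra_simps)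
  next
    fix v :: "real^'n" assume "v \<noteq> 0" then show "0 < v \<bullet> v" by simp
  qed
  have inv: "invertible Q11" by (rule posdef_inv[OF pd])
  define R where "R = matrix_inv Q11"
  have PR: "Q11 *v (R *v v) = v" "R *v (Q11 *v v) = v" for v
    using minv[OF inv] by (simp_all add: R_def matrix_vector_mul_assoc)
  have Rs: "transpose R = R" using inv_sym[OF inv sb(1)] by (simp add: R_def)
  have quadT: "stack y z \<bullet> (\<Theta> *v stack y z) = (y - Q12 *v z) \<bullet> (R *v (y - Q12 *v z)) - z \<bullet> (Q22 *v z)" for y z
  proof -
    have "ereal (1/2 * (stack y z \<bullet> (\<Theta> *v stack y z))) = ereal (1/2 * ((y - Q12 *v z) \<bullet> (R *v (y - Q12 *v z))) - 1/2 * (z \<bullet> (Q22 *v z)))"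
      using hF[of y z] FE[of y z] sup_quad[OF pd] by (simp add: R_def)
    then show ?thesis by simp
  qed
  have G: "Gamma M 1 Q = blockmat R (- (R ** Q12)) (- (Q21 ** R)) (Q21 ** R ** Q12 - Q22)"
    by (simp add: Gamma_def Let_def R_def Q11_def Q12_def Q21_def Q22_def)
  have Gs: "transpose (Gamma M 1 Q) = Gamma M 1 Q"
    unfolding G tr_blockmat by (simp add: tr_neg tr_diff matrix_transpose_mul Rs sb matrix_mul_assoc)
  have T1: "\<Theta> = Gamma M 1 Q"
  proof (rule quad_eq_mat[OF Tsym Gs])
    fix v :: "real^('n+'n)"
    obtain y z where v: "v = stack y z" using stack_eta by blast
    show "v \<bullet> (\<Theta> *v v) = v \<bullet> (Gamma M 1 Q *v v)"
      unfolding v quadT unfolding G quad_stack blk_blockmat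
      by (simp add: mvsimps inner_mv sb Rs)
  qed
  have IR: "matrix_inv R = Q11"
    by (rule minv_unique) (simp add: R_def minv[OF inv])
  have "Gamma M 1 \<Theta> = blockmat Q11 (- (Q11 ** - (R ** Q12))) (- (- (Q21 ** R) ** Q11))
        (- (Q21 ** R) ** Q11 ** - (R ** Q12) - (Q21 ** R ** Q12 - Q22))"
    unfolding T1 G by (simp add: Gamma_def Let_def IR)
  also have "\<dots> = blockmat Q11 Q12 Q21 Q22"
  proof -
    have "- (Q11 ** - (R ** Q12)) = Q12" by (simp add: matrix_eq mvsimps PR)
    moreover have "- (- (Q21 ** R) ** Q11) = Q21" by (simp add: matrix_eq mvsimps PR)
    moreover have "- (Q21 ** R) ** Q11 ** - (R ** Q12) - (Q21 ** R ** Q12 - Q22) = Q22"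
      by (simp add: matrix_eq mvsimps PR)
    ultimately show ?thesis by simp
  qed
  also have "\<dots> = Q" by (simp add: Q11_def Q12_def Q21_def Q22_def blockmat_blk[symmetric])
  finally show ?thesis using T1 by simp
qed



lemma case2:
  fixes A :: "real^'n^'n" and B :: "real^'m^'n" and Phi :: "real^'n^'n" and \<gamma> :: real
    and M :: "real^'n^'n" and k :: nat
    and Q \<Theta> :: "real^('n+'n)^('n+'n)"
  assumes Mpd: "pos_def_mat M" and Qsym: "transpose Q = Q" and Tsym: "transpose \<Theta> = \<Theta>"
    and SQ: "\<forall>x z. Ski A B Phi \<gamma> M k 2 x z = ereal (1/2 * (stack x z \<bullet> (Q *v stack x z)))"
    and BT: "\<forall>y z. Bki A B Phi \<gamma> M k 2 y z = ereal (- (1/2) * (stack y z \<bullet> (\<Theta> *v stack y z)))"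
  shows "\<Theta> = Gamma M 2 Q \<and> Q = Gamma M 2 \<Theta>"
proof -
  define Q11 where "Q11 = blk11 Q"
  define Q12 where "Q12 = blk12 Q"
  define Q21 where "Q21 = blk21 Q"
  define Q22 where "Q22 = blk22 Q"
  define P where "P = Q11 + M"
  note sb = sym_blocks[OF Qsym, folded Q11_def Q12_def Q21_def Q22_def]
  have Ms: "transpose M = M" using Mpd unfolding pos_def_mat_def by simp
  have Mpos: "v \<noteq> 0 \<Longrightarrow> v \<bullet> (M *v v) > 0" for v using Mpd unfolding pos_def_mat_def by simp
  have tr_add: "transpose (X + Y) = transpose X + transpose (Y::real^'n^'n)" for X Y
    by (simp add: vec_eq_iff transpose_def)
  have Ps: "transpose P = P" by (simp add: P_def tr_add sb Ms)
  have c12: "x \<bullet> (Q12 *v z) = z \<bullet> (Q21 *v x)" for x z by (metis inner_commute inner_mv sb(3))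
  have cM: "x \<bullet> (M *v z) = z \<bullet> (M *v x)" for x z by (metis inner_commute inner_mv Ms)
  define F where "F y z = (SUP x. psi M 2 x y - Ski A B Phi \<gamma> M k 2 x z)" for y z
  have hF: "F y z = ereal (1/2 * (stack y z \<bullet> (\<Theta> *v stack y z)))" for y z
  proof -
    have "- F y z = ereal (- (1/2) * (stack y z \<bullet> (\<Theta> *v stack y z)))"
      using BT by (simp add: Bki_def F_def)
    then show ?thesis by (metis ereal_uminus_uminus uminus_ereal.simps(1) mult_minus_left)
  qed
  have E: "psi M 2 x y - Ski A B Phi \<gamma> M k 2 x z =
      ereal ((M *v y - Q12 *v z) \<bullet> x - 1/2 * (x \<bullet> (P *v x)) - (1/2 * (y \<bullet> (M *v y)) + 1/2 * (z \<bullet> (Q22 *v z))))" for x y z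
  proof -
    have "- (1/2) * ((x - y) \<bullet> (M *v (x - y))) - 1/2 * (stack x z \<bullet> (Q *v stack x z)) =
       (M *v y - Q12 *v z) \<bullet> x - 1/2 * (x \<bullet> (P *v x)) - (1/2 * (y \<bullet> (M *v y)) + 1/2 * (z \<bullet> (Q22 *v z)))"
      using c12[of x z] cM[of x y] by (simp add: quad_stack Q11_def[symmetric] Q12_def[symmetric] Q21_def[symmetric]
          Q22_def[symmetric] P_def matrix_vector_mult_add_rdistrib mvsimps inner_commute algebra_simps)
    then show ?thesis using SQ by (simp add: psi_def)
  qed
  have FE: "F y z = (SUP x. ereal ((M *v y - Q12 *v z) \<bullet> x - 1/2 * (x \<bullet> (P *v x)) - (1/2 * (y \<bullet> (M *v y)) + 1/2 * (z \<bullet> (Q22 *v z)))))" for y z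
    unfolding F_def E ..
  have pd: "pos_def_mat P"
  proof (rule posdef_bound[where a = "\<lambda>v. v \<bullet> (M *v v)" and C = "\<lambda>v. 1/2 * (stack v 0 \<bullet> (\<Theta> *v stack v 0)) + 1/2 * (v \<bullet> (M *v v))"])
    show "transpose P = P" by (rule Ps)
    fix v :: "real^'n" and t :: real
    have "ereal ((M *v v - Q12 *v 0) \<bullet> (t *\<^sub>R v) - 1/2 * ((t *\<^sub>R v) \<bullet> (P *v (t *\<^sub>R v))) - (1/2 * (v \<bullet> (M *v v)) + 1/2 * (0 \<bullet> (Q22 *v 0)))) \<le> F v 0"
      unfolding FE by (rule SUP_upper) simp
    then show "t * (v \<bullet> (M *v v)) - t\<^sup>2 * (v \<bullet> (P *v v)) / 2 \<le> 1/2 * (stack v 0 \<bullet> (\<Theta> *v stack v 0)) + 1/2 * (v \<bullet> (M *v v))"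
      using cM[of v v] by (simp add: hF matrix_vector_mult_scaleR power2_eq_square inner_commute algebra_simps)
  next
    fix v :: "real^'n" assume "v \<noteq> 0" then show "0 < v \<bullet> (M *v v)" by (rule Mpos)
  qed
  have inv: "invertible P" by (rule posdef_inv[OF pd])
  have invM: "invertible M" by (rule posdef_inv[OF Mpd])
  define R where "R = matrix_inv P"
  define Mi where "Mi = matrix_inv M"
  have PR: "P *v (R *v v) = v" "R *v (P *v v) = v" for v
    using minv[OF inv] by (simp_all add: R_def matrix_vector_mul_assoc)
  have MMi: "M *v (Mi *v v) = v" "Mi *v (M *v v) = v" for v
    using minv[OF invM] by (simp_all add: Mi_def matrix_vector_mul_assoc)
  have Rs: "transpose R = R" using inv_sym[OF inv Ps] by (simp add: R_def)
  have quadT: "stack y z \<bullet> (\<Theta> *v stack y z) = (M *v y - Q12 *v z) \<bullet> (R *v (M *v y - Q12 *v z)) - y \<bullet> (M *v y) - z \<bullet> (Q22 *v z)" for y z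
  proof -
    have "ereal (1/2 * (stack y z \<bullet> (\<Theta> *v stack y z))) = ereal (1/2 * ((M *v y - Q12 *v z) \<bullet> (R *v (M *v y - Q12 *v z))) - (1/2 * (y \<bullet> (M *v y)) + 1/2 * (z \<bullet> (Q22 *v z))))"
      using hF[of y z] FE[of y z] sup_quad[OF pd] by (simp add: R_def)
    then show ?thesis by simp
  qed
  have G: "Gamma M 2 Q = blockmat (M ** R ** M - M) (- (M ** R ** Q12)) (- (Q21 ** R ** M)) (Q21 ** R ** Q12 - Q22)"
    by (simp add: Gamma_def Let_def R_def P_def Q11_def Q12_def Q21_def Q22_def)
  have Gs: "transpose (Gamma M 2 Q) = Gamma M 2 Q"
    unfolding G tr_blockmat by (simp add: tr_neg tr_diff matrix_transpose_mul Rs sb Ms matrix_mul_assoc)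
  have T1: "\<Theta> = Gamma M 2 Q"
  proof (rule quad_eq_mat[OF Tsym Gs])
    fix v :: "real^('n+'n)"
    obtain y z where v: "v = stack y z" using stack_eta by blast
    show "v \<bullet> (\<Theta> *v v) = v \<bullet> (Gamma M 2 Q *v v)"
      unfolding v quadT unfolding G quad_stack blk_blockmat
      by (simp add: mvsimps inner_mv sb Rs Ms)
  qed
  define S where "S = Mi ** P ** Mi"
  have e11: "M ** R ** M - M + M = M ** R ** M" by simp
  have IR: "matrix_inv (M ** R ** M) = S"
    by (rule minv_unique) (simp add: S_def matrix_eq mvsimps PR MMi)
  have PQ: "P *v v = Q11 *v v + M *v v" for v by (simp add: P_def matrix_vector_mult_add_rdistrib)
  have "Gamma M 2 \<Theta> = blockmat (M ** S ** M - M) (- (M ** S ** - (M ** R ** Q12)))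
        (- (- (Q21 ** R ** M) ** S ** M))
        (- (Q21 ** R ** M) ** S ** - (M ** R ** Q12) - (Q21 ** R ** Q12 - Q22))"
    unfolding T1 G by (simp add: Gamma_def Let_def IR)
  also have "\<dots> = blockmat Q11 Q12 Q21 Q22"
  proof -
    have "M ** S ** M - M = Q11" by (simp add: S_def matrix_eq mvsimps PR MMi PQ)
    moreover have "- (M ** S ** - (M ** R ** Q12)) = Q12" by (simp add: S_def matrix_eq mvsimps PR MMi)
    moreover have "- (- (Q21 ** R ** M) ** S ** M) = Q21" by (simp add: S_def matrix_eq mvsimps PR MMi)
    moreover have "- (Q21 ** R ** M) ** S ** - (M ** R ** Q12) - (Q21 ** R ** Q12 - Q22) = Q22"
      by (simp add: S_def matrix_eq mvsimps PR MMi)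
    ultimately show ?thesis by simp
  qed
  also have "\<dots> = Q" by (simp add: Q11_def Q12_def Q21_def Q22_def blockmat_blk[symmetric])
  finally show ?thesis using T1 by simp
qed



lemma case3:
  fixes A :: "real^'n^'n" and B :: "real^'m^'n" and Phi :: "real^'n^'n" and \<gamma> :: real
    and M :: "real^'n^'n" and k :: nat
    and Q \<Theta> :: "real^('n+'n)^('n+'n)"
  assumes Qsym: "transpose Q = Q" and Tsym: "transpose \<Theta> = \<Theta>"
    and SQ: "\<forall>x z. Ski A B Phi \<gamma> M k 3 x z = ereal (1/2 * (stack x z \<bullet> (Q *v stack x z)))"
    and BT: "\<forall>y z. Bki A B Phi \<gamma> M k 3 y z = ereal (- (1/2) * (stack y z \<bullet> (\<Theta> *v stack y z)))"
  shows "\<Theta> = Gamma M 3 Q \<and> Q = Gamma M 3 \<Theta>"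
proof -
  have F: "(SUP x. psi M 3 x y - Ski A B Phi \<gamma> M k 3 x z) = ereal (- (1/2 * (stack y z \<bullet> (Q *v stack y z))))" for y z
  proof (rule SUP_eqI)
    fix x :: "real^'n"
    show "psi M 3 x y - Ski A B Phi \<gamma> M k 3 x z \<le> ereal (- (1/2 * (stack y z \<bullet> (Q *v stack y z))))"
      using SQ by (cases "x = y") (simp_all add: psi_def)
  next
    fix u assume "\<And>x. x \<in> UNIV \<Longrightarrow> psi M 3 x y - Ski A B Phi \<gamma> M k 3 x z \<le> u"
    then have "psi M 3 y y - Ski A B Phi \<gamma> M k 3 y z \<le> u" by blast
    then show "ereal (- (1/2 * (stack y z \<bullet> (Q *v stack y z)))) \<le> u" using SQ by (simp add: psi_def)
  qed
  have q: "stack y z \<bullet> (\<Theta> *v stack y z) = stack y z \<bullet> ((- Q) *v stack y z)" for y z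
  proof -
    have "Bki A B Phi \<gamma> M k 3 y z = ereal (1/2 * (stack y z \<bullet> (Q *v stack y z)))"
      unfolding Bki_def F by simp
    then show ?thesis using BT by (simp add: mv_neg)
  qed
  have T1: "\<Theta> = - Q"
  proof (rule quad_eq_mat[OF Tsym])
    show "transpose (- Q) = - Q" by (simp add: tr_neg Qsym)
    fix v :: "real^('n+'n)"
    obtain y z where v: "v = stack y z" using stack_eta by blast
    show "v \<bullet> (\<Theta> *v v) = v \<bullet> ((- Q) *v v)" unfolding v by (rule q)
  qed
  then show ?thesis by (simp add: Gamma_def)
qed

theorem theorem3p5:
  fixes A :: "real^'n^'n" and B :: "real^'m^'n" and Phi :: "real^'n^'n" and \<gamma> :: real
    and M :: "real^'n^'n" and k i :: nat
    and Q \<Theta> :: "real^('n+'n)^('n+'n)"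
  assumes M: "pos_def_mat M"
    and k: "k > 0" and i: "i \<in> {1, 2, 3}"
    and Qsym: "transpose Q = Q" and Tsym: "transpose \<Theta> = \<Theta>"
    and SQ: "\<forall>x z. Ski A B Phi \<gamma> M k i x z = ereal (1/2 * (stack x z \<bullet> (Q *v stack x z)))"
    and BT: "\<forall>y z. Bki A B Phi \<gamma> M k i y z = ereal (- (1/2) * (stack y z \<bullet> (\<Theta> *v stack y z)))"
  shows "\<Theta> = Gamma M i Q \<and> Q = Gamma M i \<Theta>"
  using i
proof (elim insertE emptyE)
  assume "i = 1" then show ?thesis using case1[OF Qsym Tsym] SQ BT by blast
next
  assume "i = 2" then show ?thesis using case2[OF M Qsym Tsym] SQ BT by blast
next
  assume "i = 3" then show ?thesis using case3[OF Qsym Tsym] SQ BT by blast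
qed


end
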